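(* Let $\theta_1<\theta_2$, $f\in C^2([\theta_1,\theta_2])$, $\gamma>1$, and let $I\subseteq[\theta_1,\theta_2]$ be a closed interval. Suppose that, for positive constants $A$ and $\alpha$ with $\alpha<2\gamma-2$, one of the following holds: $f(s)f''(s)\le -A(s-\theta_1)^\alpha$ for all $s\in I$; or $f(s)f''(s)\le -A(\theta_2-s)^\alpha$ for all $s\in I$. Then there is a constant $C>0$ depending only on $A,\alpha,\theta_1,\theta_2,\gamma$ such that $\int_I|f(s)|^{-1/\gamma}\,ds\le C$. *)

theory Defs
  imports "HOL-Analysis.Analysis"
begin

definition C2_on_with :: "real \<Rightarrow> real \<Rightarrow> (real \<Rightarrow> real) \<Rightarrow> (real \<Rightarrow> real) \<Rightarrow> (real \<Rightarrow> real) \<Rightarrow> bool" where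
  "C2_on_with t1 t2 f f' f'' \<longleftrightarrow>
     (\<forall>x\<in>{t1..t2}. (f has_real_derivative f' x) (at x within {t1..t2})) \<and>
     (\<forall>x\<in>{t1..t2}. (f' has_real_derivative f'' x) (at x within {t1..t2})) \<and>
     continuous_on {t1..t2} f''"

definition neg_pow_abs :: "real \<Rightarrow> (real \<Rightarrow> real) \<Rightarrow> real \<Rightarrow> ennreal" where
  "neg_pow_abs g f s = (if f s = 0 then \<infinity> else ennreal (\<bar>f s\<bar> powr (- 1 / g)))"

end

theory Submission
  imports Defs
begin

lemma conc_nonneg:
  fixes h h' h'' :: "real \<Rightarrow> real"
  assumes xy: "x < y" and cont: "continuous_on {x..y} h"
    and d1: "\<And>t. x < t \<Longrightarrow> t < y \<Longrightarrow> (h has_real_derivative h' t) (at t)"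
    and d2: "\<And>t. x < t \<Longrightarrow> t < y \<Longrightarrow> (h' has_real_derivative h'' t) (at t)"
    and neg: "\<And>t. x < t \<Longrightarrow> t < y \<Longrightarrow> h'' t \<le> 0"
    and hx: "h x \<ge> 0" and hy: "h y \<ge> 0"
    and s: "x \<le> s" "s \<le> y"
  shows "h s \<ge> 0"
proof (rule ccontr)
  assume "\<not> h s \<ge> 0"
  hence hs: "h s < 0" by simp
  have sx: "x < s" using hs hx s by (cases "s = x") auto
  have sy: "s < y" using hs hy s by (cases "s = y") auto
  have c1: "continuous_on {x..s} h" using cont continuous_on_subset s by fastforce
  have c2: "continuous_on {s..y} h" using cont continuous_on_subset s by fastforce
  obtain l1 z1 where z1: "x < z1" "z1 < s" "DERIV h z1 :> l1" "h s - h x = (s - x) * l1"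
    using MVT[OF sx c1] d1 sy real_differentiable_def
    by (smt (verit, ccfv_threshold))
  obtain l2 z2 where z2: "s < z2" "z2 < y" "DERIV h z2 :> l2" "h y - h s = (y - s) * l2"
    using MVT[OF sy c2] d1 sx real_differentiable_def
    by (smt (verit, ccfv_threshold))
  have "l1 = h' z1" using z1 d1[of z1] sy DERIV_unique by auto
  have "l2 = h' z2" using z2 d1[of z2] sx DERIV_unique by auto
  have "(s - x) * l1 < 0" using z1 hs hx by linarith
  hence l1: "l1 < 0" using sx by (simp add: mult_less_0_iff)
  have "(y - s) * l2 > 0" using z2 hs hy by linarith
  hence l2: "l2 > 0" using sy by (simp add: zero_less_mult_iff)
  have zz: "z1 < z2" using z1 z2 by simp
  obtain z where z: "z1 < z" "z < z2" "h' z2 - h' z1 = (z2 - z1) * h'' z"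
    using MVT2[OF zz, of h' h''] d2 z1 z2 by force
  have "h'' z \<le> 0" using neg z z1 z2 by auto
  hence "(z2 - z1) * h'' z \<le> 0" using zz by (simp add: mult_nonneg_nonpos)
  thus False using z \<open>l1 = h' z1\<close> \<open>l2 = h' z2\<close> l1 l2 by linarith
qed

lemma powr_int_bound:
  fixes a b p :: real
  assumes ab: "a < b" and p: "0 < p" "p < 1"
  shows "((\<lambda>t. (t - a) powr (- p) + (b - t) powr (- p)) has_integral (2 * (b - a) powr (1 - p) / (1 - p))) {a..b}"
proof -
  define F where "F = (\<lambda>t. ((t - a) powr (1 - p) - (b - t) powr (1 - p)) / (1 - p))"
  have cont: "continuous_on {a..b} F"
    unfolding F_def using p
    by (intro continuous_intros continuous_on_powr') auto
  have der: "(F has_vector_derivative ((t - a) powr (- p) + (b - t) powr (- p))) (at t)"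
    if t: "t \<in> {a<..<b}" for t
  proof -
    have "(F has_real_derivative ((1 - p) * (t - a) powr (1 - p - 1) - (1 - p) * (b - t) powr (1 - p - 1) * (-1)) / (1 - p)) (at t)"
      unfolding F_def using t p
      by (auto intro!: derivative_eq_intros)
    moreover have "((1 - p) * (t - a) powr (1 - p - 1) - (1 - p) * (b - t) powr (1 - p - 1) * (-1)) / (1 - p)
        = (t - a) powr (- p) + (b - t) powr (- p)"
      using p by (simp add: field_simps)
    ultimately show ?thesis by (simp add: has_real_derivative_iff_has_vector_derivative)
  qed
  have "((\<lambda>t. (t - a) powr (- p) + (b - t) powr (- p)) has_integral (F b - F a)) {a..b}"
    using fundamental_theorem_of_calculus_interior[OF _ cont der] ab by auto
  moreover have "F b - F a = 2 * (b - a) powr (1 - p) / (1 - p)"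
  proof -
    define X where "X = (b - a) powr (1 - p)"
    have "F b = X / (1 - p)" "F a = - X / (1 - p)" unfolding F_def X_def using p ab by simp_all
    hence "F b - F a = X / (1 - p) + X / (1 - p)" by simp
    also have "\<dots> = 2 * X / (1 - p)" by (metis mult_2 add_divide_distrib)
    finally show ?thesis unfolding X_def .
  qed
  ultimately show ?thesis by simp
qed

lemma core:
  fixes f f' f'' :: "real \<Rightarrow> real" and a b c d B g :: real
  assumes ab: "a < b" and cont: "continuous_on {a..b} f"
    and d1: "\<And>t. a < t \<Longrightarrow> t < b \<Longrightarrow> (f has_real_derivative f' t) (at t)"
    and d2: "\<And>t. a < t \<Longrightarrow> t < b \<Longrightarrow> (f' has_real_derivative f'' t) (at t)"
    and pos: "\<And>t. a < t \<Longrightarrow> t < b \<Longrightarrow> f t > 0"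
    and cc: "\<And>t. a < t \<Longrightarrow> t < b \<Longrightarrow> f'' t \<le> 0"
    and cd: "a \<le> c" "d \<le> b" "d - c = (b - a) / 2"
    and fB: "\<And>t. c < t \<Longrightarrow> t < d \<Longrightarrow> f t * f'' t \<le> - B"
    and B: "B > 0" and g: "g > 1"
  shows "\<exists>M>0. B * ((b - a) / 2)^2 / 8 \<le> M^2 \<and>
     (\<integral>\<^sup>+ s\<in>{a..b}. neg_pow_abs g f s \<partial>lborel) \<le> ennreal (2 * g / (g - 1) * M powr (- 1 / g) * (b - a))"
proof -
  define mid where "mid = (a + b) / 2"
  have mid: "a < mid" "mid < b" using ab by (auto simp: mid_def)
  have fmid: "f mid > 0" using pos mid by auto
  have fa: "f a \<ge> 0"
  proof (rule ccontr)
    assume "\<not> f a \<ge> 0"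
    hence "f a \<le> 0" "0 \<le> f mid" using fmid by auto
    moreover have "continuous_on {a..mid} f" using cont mid by (auto elim: continuous_on_subset)
    ultimately obtain x where "a \<le> x" "x \<le> mid" "f x = 0" using IVT'[of f a 0 mid] mid by auto
    moreover have "x \<noteq> a" using \<open>\<not> f a \<ge> 0\<close> \<open>f x = 0\<close> by auto
    ultimately show False using pos[of x] mid by auto
  qed
  have fb: "f b \<ge> 0"
  proof (rule ccontr)
    assume "\<not> f b \<ge> 0"
    hence "f b \<le> 0" "0 \<le> f mid" using fmid by auto
    moreover have "continuous_on {mid..b} f" using cont mid by (auto elim: continuous_on_subset)
    ultimately obtain x where "mid \<le> x" "x \<le> b" "f x = 0" using IVT2'[of f b 0 mid] mid by auto
    moreover have "x \<noteq> b" using \<open>\<not> f b \<ge> 0\<close> \<open>f x = 0\<close> by auto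
    ultimately show False using pos[of x] mid by auto
  qed
  have nonneg: "f t \<ge> 0" if "a \<le> t" "t \<le> b" for t
    using that fa fb pos[of t] by (cases "t = a"; cases "t = b") auto
  obtain m where m: "m \<in> {a..b}" "\<And>y. y \<in> {a..b} \<Longrightarrow> f y \<le> f m"
    using continuous_attains_sup[OF compact_Icc _ cont] ab by auto
  define M where "M = f m"
  have Mge: "f t \<le> M" if "a \<le> t" "t \<le> b" for t using m that unfolding M_def by auto
  have M0: "M > 0" using Mge[of mid] mid fmid by auto
  define K where "K = B / M"
  have K0: "K > 0" using B M0 by (simp add: K_def)
  have cd': "c < d" using cd ab by auto
  have hmid: "f ((c + d) / 2) + K / 2 * ((c + d) / 2 - c) * ((c + d) / 2 - d) \<ge> 0"
  proof (rule conc_nonneg[where h = "\<lambda>t. f t + K / 2 * (t - c) * (t - d)"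
        and h' = "\<lambda>t. f' t + K / 2 * ((t - c) + (t - d))" and h'' = "\<lambda>t. f'' t + K"])
    show "c < d" by (rule cd')
    show "continuous_on {c..d} (\<lambda>t. f t + K / 2 * (t - c) * (t - d))"
      using cont cd by (auto intro!: continuous_intros elim: continuous_on_subset)
    show "((\<lambda>t. f t + K / 2 * (t - c) * (t - d)) has_real_derivative f' t + K / 2 * ((t - c) + (t - d))) (at t)"
      if "c < t" "t < d" for t
      using that cd by (auto intro!: derivative_eq_intros d1 simp: field_simps)
    show "((\<lambda>t. f' t + K / 2 * ((t - c) + (t - d))) has_real_derivative f'' t + K) (at t)"
      if "c < t" "t < d" for t
      using that cd by (auto intro!: derivative_eq_intros d2 simp: algebra_simps)
    show "f'' t + K \<le> 0" if "c < t" "t < d" for t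
    proof -
      have ft: "f t > 0" "f t \<le> M" using pos[of t] Mge[of t] that cd by auto
      have "f'' t \<le> - B / f t" using fB[OF that] ft by (simp add: field_simps)
      moreover have "B / M \<le> B / f t" using ft B by (intro divide_left_mono) auto
      ultimately show ?thesis unfolding K_def by linarith
    qed
    show "0 \<le> f c + K / 2 * (c - c) * (c - d)" using nonneg[of c] cd cd' by auto
    show "0 \<le> f d + K / 2 * (d - c) * (d - d)" using nonneg[of d] cd cd' by auto
  qed (use cd' in auto)
  have "K / 2 * ((c + d) / 2 - c) * ((c + d) / 2 - d) = - (K * (d - c)^2 / 8)"
    by (simp add: field_simps power2_eq_square)
  hence "f ((c + d) / 2) \<ge> K * (d - c)^2 / 8" using hmid by linarith
  moreover have "f ((c + d) / 2) \<le> M" using Mge cd cd' by auto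
  ultimately have "B / M * (d - c)^2 / 8 \<le> M" unfolding K_def by linarith
  hence "B * (d - c)^2 / 8 \<le> M * M" using M0 by (simp add: field_simps)
  hence Mlow: "B * ((b - a) / 2)^2 / 8 \<le> M^2" using cd by (simp add: power2_eq_square)
  have tent: "f t \<ge> M * (t - a) / (b - a) \<or> f t \<ge> M * (b - t) / (b - a)" if t: "a < t" "t < b" for t
  proof (cases "t \<le> m")
    case True
    hence am: "a < m" using t by auto
    have "f t - M * (t - a) / (m - a) \<ge> 0"
    proof (rule conc_nonneg[where h = "\<lambda>u. f u - M * (u - a) / (m - a)"
        and h' = "\<lambda>u. f' u - M / (m - a)" and h'' = "f''" and x = a and y = m])
      show "continuous_on {a..m} (\<lambda>u. f u - M * (u - a) / (m - a))"
        using continuous_on_subset[OF cont, of "{a..m}"] m am by (auto intro!: continuous_intros)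
      show "((\<lambda>u. f u - M * (u - a) / (m - a)) has_real_derivative f' u - M / (m - a)) (at u)"
        if "a < u" "u < m" for u
        using that m am by (auto intro!: derivative_eq_intros d1)
      show "((\<lambda>u. f' u - M / (m - a)) has_real_derivative f'' u) (at u)" if "a < u" "u < m" for u
        using that m by (auto intro!: derivative_eq_intros d2)
      show "f'' u \<le> 0" if "a < u" "u < m" for u using that m cc by auto
      show "0 \<le> f a - M * (a - a) / (m - a)" using fa by simp
      show "0 \<le> f m - M * (m - a) / (m - a)" using am unfolding M_def by simp
    qed (use am t True in auto)
    moreover have "M * (t - a) / (b - a) \<le> M * (t - a) / (m - a)"
      using M0 t am m by (intro divide_left_mono) auto
    ultimately show ?thesis by auto
  next
    case False
    hence mb: "m < b" using t by auto
    have "f t + M * (t - b) / (b - m) \<ge> 0"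
    proof (rule conc_nonneg[where h = "\<lambda>u. f u + M * (u - b) / (b - m)"
        and h' = "\<lambda>u. f' u + M / (b - m)" and h'' = "f''" and x = m and y = b])
      show "continuous_on {m..b} (\<lambda>u. f u + M * (u - b) / (b - m))"
        using continuous_on_subset[OF cont, of "{m..b}"] m mb by (auto intro!: continuous_intros)
      show "((\<lambda>u. f u + M * (u - b) / (b - m)) has_real_derivative f' u + M / (b - m)) (at u)"
        if "m < u" "u < b" for u
        using that m mb by (auto intro!: derivative_eq_intros d1)
      show "((\<lambda>u. f' u + M / (b - m)) has_real_derivative f'' u) (at u)" if "m < u" "u < b" for u
        using that m by (auto intro!: derivative_eq_intros d2)
      show "f'' u \<le> 0" if "m < u" "u < b" for u using that m cc by auto
      show "0 \<le> f b + M * (b - b) / (b - m)" using fb by simp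
      have "M * (m - b) / (b - m) = - M" using mb by (simp add: field_simps)
      thus "0 \<le> f m + M * (m - b) / (b - m)" unfolding M_def by simp
    qed (use mb t False in auto)
    moreover have "M * (t - b) / (b - m) = - (M * (b - t) / (b - m))" using mb by (simp add: field_simps)
    moreover have "M * (b - t) / (b - a) \<le> M * (b - t) / (b - m)"
      using M0 t mb m by (intro divide_left_mono) auto
    ultimately show ?thesis by auto
  qed
  define p where "p = 1 / g"
  have p: "0 < p" "p < 1" using g by (auto simp: p_def)
  define Kc where "Kc = M powr (- p) * (b - a) powr p"
  have Kc0: "Kc \<ge> 0" by (simp add: Kc_def)
  have pw: "f t powr (- p) \<le> Kc * ((t - a) powr (- p) + (b - t) powr (- p))" if t: "a < t" "t < b" for t
  proof -
    from tent[OF t] show ?thesis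
    proof
      assume h: "f t \<ge> M * (t - a) / (b - a)"
      have q: "M * (t - a) / (b - a) > 0" using M0 t by auto
      have "f t powr (- p) \<le> (M * (t - a) / (b - a)) powr (- p)"
        using powr_mono2'[of "- p", OF _ q h] p by auto
      also have "\<dots> = M powr (- p) * (t - a) powr (- p) / (b - a) powr (- p)"
        using M0 t ab by (simp add: powr_divide powr_mult)
      also have "\<dots> = Kc * (t - a) powr (- p)"
        unfolding Kc_def by (simp add: powr_minus divide_inverse mult_ac)
      also have "\<dots> \<le> Kc * ((t - a) powr (- p) + (b - t) powr (- p))"
        using Kc0 by (intro mult_left_mono) auto
      finally show ?thesis .
    next
      assume h: "f t \<ge> M * (b - t) / (b - a)"
      have q: "M * (b - t) / (b - a) > 0" using M0 t by auto
      have "f t powr (- p) \<le> (M * (b - t) / (b - a)) powr (- p)"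
        using powr_mono2'[of "- p", OF _ q h] p by auto
      also have "\<dots> = M powr (- p) * (b - t) powr (- p) / (b - a) powr (- p)"
        using M0 t ab by (simp add: powr_divide powr_mult)
      also have "\<dots> = Kc * (b - t) powr (- p)"
        unfolding Kc_def by (simp add: powr_minus divide_inverse mult_ac)
      also have "\<dots> \<le> Kc * ((t - a) powr (- p) + (b - t) powr (- p))"
        using Kc0 by (intro mult_left_mono) auto
      finally show ?thesis .
    qed
  qed
  have hi: "((\<lambda>t. Kc * ((t - a) powr (- p) + (b - t) powr (- p))) has_integral
      (Kc * (2 * (b - a) powr (1 - p) / (1 - p)))) {a..b}"
    using has_integral_mult_right[OF powr_int_bound[OF ab p]] .
  have nn: "(\<integral>\<^sup>+ t. ennreal (Kc * ((t - a) powr (- p) + (b - t) powr (- p))) * indicator {a..b} t \<partial>lborel)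
      = ennreal (Kc * (2 * (b - a) powr (1 - p) / (1 - p)))"
    by (rule nn_integral_has_integral_lebesgue'[OF _ hi]) (use Kc0 in auto)
  have ae: "AE s in lborel. s \<noteq> a \<and> s \<noteq> b" by (intro AE_conjI AE_lborel_singleton)
  have "AE s in lborel. neg_pow_abs g f s * indicator {a..b} s
      \<le> ennreal (Kc * ((s - a) powr (- p) + (b - s) powr (- p))) * indicator {a..b} s"
    using ae
  proof eventually_elim
    case (elim s)
    show ?case
    proof (cases "s \<in> {a..b}")
      case True
      hence s: "a < s" "s < b" using elim by auto
      have "neg_pow_abs g f s = ennreal (f s powr (- p))"
        using pos[OF s] unfolding neg_pow_abs_def p_def by simp
      also have "\<dots> \<le> ennreal (Kc * ((s - a) powr (- p) + (b - s) powr (- p)))"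
        using pw[OF s] by (rule ennreal_leI)
      finally show ?thesis using True by simp
    qed simp
  qed
  hence "(\<integral>\<^sup>+ s\<in>{a..b}. neg_pow_abs g f s \<partial>lborel) \<le> ennreal (Kc * (2 * (b - a) powr (1 - p) / (1 - p)))"
    using nn by (metis nn_integral_mono_AE)
  moreover have "Kc * (2 * (b - a) powr (1 - p) / (1 - p)) = 2 * g / (g - 1) * M powr (- 1 / g) * (b - a)"
  proof -
    have e1: "(b - a) powr p * (b - a) powr (1 - p) = b - a" using ab by (simp add: powr_add[symmetric])
    have e2: "1 - p = (g - 1) / g" using g by (simp add: p_def field_simps)
    have e3: "- p = - 1 / g" by (simp add: p_def)
    have "Kc * (2 * (b - a) powr (1 - p) / (1 - p))
        = M powr (- p) * ((b - a) powr p * (b - a) powr (1 - p)) * (2 / (1 - p))"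
      unfolding Kc_def by (simp add: mult_ac)
    also have "\<dots> = M powr (- 1 / g) * (b - a) * (2 * g / (g - 1))"
      by (subst e1) (use g in \<open>simp add: e2 e3\<close>)
    finally show ?thesis by (simp add: mult_ac)
  qed
  ultimately show ?thesis using M0 Mlow by auto
qed

lemma arith_bound:
  fixes M L A g al T :: real
  assumes M0: "M > 0" and L0: "L > 0" and A0: "A > 0" and g: "g > 1" and al: "al > 0" "al < 2 * g - 2"
    and LT: "L \<le> T"
    and Mlow: "A * L powr al * L^2 / 8 \<le> M^2"
  shows "2 * g / (g - 1) * M powr (- 1 / g) * (2 * L)
     \<le> 4 * g / (g - 1) * (A / 8) powr (- 1 / (2 * g)) * T powr (1 - (al + 2) / (2 * g))"
proof -
  define q where "q = - 1 / (2 * g)"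
  have q0: "q \<le> 0" using g by (simp add: q_def)
  have M2: "M^2 = M powr 2" using M0 by (simp add: powr_numeral)
  have L2: "L^2 = L powr 2" using L0 by (simp add: powr_numeral)
  have h1: "M powr (- 1 / g) = (M^2) powr q"
    unfolding M2 powr_powr q_def using g by (simp add: field_simps)
  have pos: "A * L powr al * L^2 / 8 > 0" using A0 L0 by simp
  have h2: "(M^2) powr q \<le> (A * L powr al * L^2 / 8) powr q"
    by (rule powr_mono2'[OF q0 pos Mlow])
  have h3: "A * L powr al * L^2 / 8 = (A / 8) * L powr (al + 2)"
    unfolding L2 by (simp add: powr_add)
  have h4: "(A * L powr al * L^2 / 8) powr q = (A / 8) powr q * L powr ((al + 2) * q)"
  proof -
    have "(A * L powr al * L^2 / 8) powr q = ((A / 8) * L powr (al + 2)) powr q" by (simp only: h3)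
    also have "\<dots> = (A / 8) powr q * (L powr (al + 2)) powr q" by (rule powr_mult)
    also have "\<dots> = (A / 8) powr q * L powr ((al + 2) * q)" by (simp only: powr_powr)
    finally show ?thesis .
  qed
  define e where "e = 1 - (al + 2) / (2 * g)"
  have e0: "e \<ge> 0" using g al by (simp add: e_def field_simps)
  have h5: "L powr ((al + 2) * q) * L = L powr e"
  proof -
    have x: "(al + 2) * q + 1 = e" using g unfolding e_def q_def by (simp add: field_simps)
    have "L powr ((al + 2) * q) * L = L powr ((al + 2) * q) * L powr 1" using L0 by simp
    also have "\<dots> = L powr ((al + 2) * q + 1)" by (simp only: powr_add)
    finally show ?thesis unfolding x .
  qed
  have h6: "L powr e \<le> T powr e" using e0 L0 LT by (intro powr_mono2) auto
  have c0: "2 * g / (g - 1) > 0" using g by simp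
  have "2 * g / (g - 1) * M powr (- 1 / g) * (2 * L)
      \<le> 2 * g / (g - 1) * ((A / 8) powr q * L powr ((al + 2) * q)) * (2 * L)"
    using h1 h2 h4 c0 L0 by (intro mult_right_mono mult_left_mono) auto
  also have "\<dots> = 4 * g / (g - 1) * (A / 8) powr q * (L powr ((al + 2) * q) * L)"
    by (simp add: field_simps)
  also have "\<dots> \<le> 4 * g / (g - 1) * (A / 8) powr q * T powr e"
    unfolding h5 using h6 g by (intro mult_left_mono) auto
  finally show ?thesis unfolding q_def e_def .
qed

lemma core2:
  fixes f f' f'' :: "real \<Rightarrow> real" and a b c d A al g T :: real
  assumes ab: "a < b" and cont: "continuous_on {a..b} f"
    and d1: "\<And>t. a < t \<Longrightarrow> t < b \<Longrightarrow> (f has_real_derivative f' t) (at t)"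
    and d2: "\<And>t. a < t \<Longrightarrow> t < b \<Longrightarrow> (f' has_real_derivative f'' t) (at t)"
    and pos: "\<And>t. a < t \<Longrightarrow> t < b \<Longrightarrow> f t > 0"
    and neg: "\<And>t. a < t \<Longrightarrow> t < b \<Longrightarrow> f t * f'' t < 0"
    and cd: "a \<le> c" "d \<le> b" "d - c = (b - a) / 2"
    and fB: "\<And>t. c < t \<Longrightarrow> t < d \<Longrightarrow> f t * f'' t \<le> - (A * ((b - a) / 2) powr al)"
    and A0: "A > 0" and g: "g > 1" and al: "al > 0" "al < 2 * g - 2" and T: "b - a \<le> T"
  shows "(\<integral>\<^sup>+ s\<in>{a..b}. neg_pow_abs g f s \<partial>lborel)
     \<le> ennreal (4 * g / (g - 1) * (A / 8) powr (- 1 / (2 * g)) * T powr (1 - (al + 2) / (2 * g)))"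
proof -
  have cc: "f'' t \<le> 0" if "a < t" "t < b" for t
    using neg[OF that] pos[OF that] by (simp add: mult_less_0_iff)
  have B: "A * ((b - a) / 2) powr al > 0" using A0 ab by simp
  obtain M where M: "M > 0" "A * ((b - a) / 2) powr al * ((b - a) / 2)^2 / 8 \<le> M^2"
    "(\<integral>\<^sup>+ s\<in>{a..b}. neg_pow_abs g f s \<partial>lborel) \<le> ennreal (2 * g / (g - 1) * M powr (- 1 / g) * (b - a))"
    using core[OF ab cont d1 d2 pos cc cd fB B g] by blast
  have "2 * g / (g - 1) * M powr (- 1 / g) * (2 * ((b - a) / 2))
     \<le> 4 * g / (g - 1) * (A / 8) powr (- 1 / (2 * g)) * T powr (1 - (al + 2) / (2 * g))"
    by (rule arith_bound[OF M(1) _ A0 g al _ M(2)]) (use ab T in auto)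
  moreover have e: "2 * ((b - a) / 2) = b - a" by simp
  ultimately have "2 * g / (g - 1) * M powr (- 1 / g) * (b - a)
     \<le> 4 * g / (g - 1) * (A / 8) powr (- 1 / (2 * g)) * T powr (1 - (al + 2) / (2 * g))" by (simp only: e)
  with M(3) show ?thesis using ennreal_leI order_trans by blast
qed

theorem lemma3p7:
  fixes \<theta>1 \<theta>2 \<gamma> A \<alpha> :: real
  assumes "\<theta>1 < \<theta>2" and "\<gamma> > 1" and "A > 0" and "\<alpha> > 0" and "\<alpha> < 2 * \<gamma> - 2"
  shows "\<exists>C>0. \<forall>f f' f'' a b.
           C2_on_with \<theta>1 \<theta>2 f f' f'' \<and> \<theta>1 \<le> a \<and> b \<le> \<theta>2 \<and>
           ((\<forall>s\<in>{a..b}. f s * f'' s \<le> - A * (s - \<theta>1) powr \<alpha>) \<or>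
            (\<forall>s\<in>{a..b}. f s * f'' s \<le> - A * (\<theta>2 - s) powr \<alpha>))
           \<longrightarrow> (\<integral>\<^sup>+ s\<in>{a..b}. neg_pow_abs \<gamma> f s \<partial>lborel) \<le> ennreal C"
proof -
  note th = assms(1) and g = assms(2) and A0 = assms(3) and al = assms(4,5)
  define T where "T = \<theta>2 - \<theta>1"
  define C where "C = 4 * \<gamma> / (\<gamma> - 1) * (A / 8) powr (- 1 / (2 * \<gamma>)) * T powr (1 - (\<alpha> + 2) / (2 * \<gamma>))"
  have C0: "C > 0" using g A0 th unfolding C_def T_def by simp
  show ?thesis
  proof (intro exI[of _ C] conjI allI impI C0)
    fix f f' f'' :: "real \<Rightarrow> real" and a b :: real
    assume H: "C2_on_with \<theta>1 \<theta>2 f f' f'' \<and> \<theta>1 \<le> a \<and> b \<le> \<theta>2 \<and>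
           ((\<forall>s\<in>{a..b}. f s * f'' s \<le> - A * (s - \<theta>1) powr \<alpha>) \<or>
            (\<forall>s\<in>{a..b}. f s * f'' s \<le> - A * (\<theta>2 - s) powr \<alpha>))"
    hence C2: "C2_on_with \<theta>1 \<theta>2 f f' f''" and a: "\<theta>1 \<le> a" and b: "b \<le> \<theta>2"
      and cases: "(\<forall>s\<in>{a..b}. f s * f'' s \<le> - A * (s - \<theta>1) powr \<alpha>) \<or>
            (\<forall>s\<in>{a..b}. f s * f'' s \<le> - A * (\<theta>2 - s) powr \<alpha>)" by auto
    show "(\<integral>\<^sup>+ s\<in>{a..b}. neg_pow_abs \<gamma> f s \<partial>lborel) \<le> ennreal C"
    proof (cases "a < b")
      case False
      have "{a..b} \<subseteq> {a}" using False by auto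
      hence "finite {a..b}" by (rule finite_subset) simp
      hence "(\<integral>\<^sup>+ s\<in>{a..b}. neg_pow_abs \<gamma> f s \<partial>lborel) = 0"
        by (intro nn_integral_null_set finite_imp_null_set_lborel)
      thus ?thesis by simp
    next
      case ab: True
      from C2 have D1: "\<And>x. x \<in> {\<theta>1..\<theta>2} \<Longrightarrow> (f has_real_derivative f' x) (at x within {\<theta>1..\<theta>2})"
        and D2: "\<And>x. x \<in> {\<theta>1..\<theta>2} \<Longrightarrow> (f' has_real_derivative f'' x) (at x within {\<theta>1..\<theta>2})"
        unfolding C2_on_with_def by auto
      have cont: "continuous_on {a..b} f"
        using DERIV_continuous_on[OF D1] a b by (auto elim: continuous_on_subset)
      have int: "at t within {\<theta>1..\<theta>2} = at t" if "a < t" "t < b" for t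
        using that a b by (intro at_within_interior) auto
      have d1: "(f has_real_derivative f' t) (at t)" if "a < t" "t < b" for t
        using D1[of t] int[OF that] that a b by auto
      have d2: "(f' has_real_derivative f'' t) (at t)" if "a < t" "t < b" for t
        using D2[of t] int[OF that] that a b by auto
      define L where "L = (b - a) / 2"
      have L0: "L > 0" using ab by (simp add: L_def)
      obtain c d where cd: "a \<le> c" "d \<le> b" "d - c = (b - a) / 2"
        and fB: "\<And>t. c < t \<Longrightarrow> t < d \<Longrightarrow> f t * f'' t \<le> - (A * ((b - a) / 2) powr \<alpha>)"
        and neg: "\<And>t. a < t \<Longrightarrow> t < b \<Longrightarrow> f t * f'' t < 0"
      proof -
        from cases show ?thesis
        proof
          assume h: "\<forall>s\<in>{a..b}. f s * f'' s \<le> - A * (s - \<theta>1) powr \<alpha>"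
          show ?thesis
          proof (rule that[of "(a + b) / 2" b])
            show "f t * f'' t \<le> - (A * ((b - a) / 2) powr \<alpha>)" if "(a + b) / 2 < t" "t < b" for t
            proof -
              have "((b - a) / 2) powr \<alpha> \<le> (t - \<theta>1) powr \<alpha>"
                using that a ab al by (intro powr_mono2) auto
              hence "A * ((b - a) / 2) powr \<alpha> \<le> A * (t - \<theta>1) powr \<alpha>" using A0 by simp
              moreover have tin: "t \<in> {a..b}" using that ab by auto
              moreover have "f t * f'' t \<le> - A * (t - \<theta>1) powr \<alpha>" by (rule bspec[OF h tin])
              ultimately show ?thesis by simp
            qed
            show "f t * f'' t < 0" if "a < t" "t < b" for t
            proof -
              have "0 < A * (t - \<theta>1) powr \<alpha>" using A0 that a by simp
              moreover have tin: "t \<in> {a..b}" using that by auto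
              moreover have "f t * f'' t \<le> - A * (t - \<theta>1) powr \<alpha>" by (rule bspec[OF h tin])
              ultimately show ?thesis by simp
            qed
          qed (use ab in \<open>auto simp: field_simps\<close>)
        next
          assume h: "\<forall>s\<in>{a..b}. f s * f'' s \<le> - A * (\<theta>2 - s) powr \<alpha>"
          show ?thesis
          proof (rule that[of a "(a + b) / 2"])
            show "f t * f'' t \<le> - (A * ((b - a) / 2) powr \<alpha>)" if "a < t" "t < (a + b) / 2" for t
            proof -
              have "((b - a) / 2) powr \<alpha> \<le> (\<theta>2 - t) powr \<alpha>"
                using that b ab al by (intro powr_mono2) auto
              hence "A * ((b - a) / 2) powr \<alpha> \<le> A * (\<theta>2 - t) powr \<alpha>" using A0 by simp
              moreover have tin: "t \<in> {a..b}" using that ab by auto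
              moreover have "f t * f'' t \<le> - A * (\<theta>2 - t) powr \<alpha>" by (rule bspec[OF h tin])
              ultimately show ?thesis by simp
            qed
            show "f t * f'' t < 0" if "a < t" "t < b" for t
            proof -
              have "0 < A * (\<theta>2 - t) powr \<alpha>" using A0 that b by simp
              moreover have tin: "t \<in> {a..b}" using that by auto
              moreover have "f t * f'' t \<le> - A * (\<theta>2 - t) powr \<alpha>" by (rule bspec[OF h tin])
              ultimately show ?thesis by simp
            qed
          qed (use ab in \<open>auto simp: field_simps\<close>)
        qed
      qed
      have nz: "f t \<noteq> 0" if "a < t" "t < b" for t using neg[OF that] by auto
      have T: "b - a \<le> T" using a b unfolding T_def by simp
      have sign: "(\<forall>t. a < t \<and> t < b \<longrightarrow> f t > 0) \<or> (\<forall>t. a < t \<and> t < b \<longrightarrow> f t < 0)"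
      proof (rule ccontr)
        assume "\<not> ?thesis"
        then obtain t1 t2 where t1: "a < t1" "t1 < b" "f t1 \<le> 0" and t2: "a < t2" "t2 < b" "f t2 \<ge> 0"
          by (meson not_less)
        have "\<exists>x. min t1 t2 \<le> x \<and> x \<le> max t1 t2 \<and> f x = 0"
        proof (cases "t1 \<le> t2")
          case True
          have "continuous_on {t1..t2} f" using cont t1 t2 by (auto elim: continuous_on_subset)
          thus ?thesis using IVT'[of f t1 0 t2] t1 t2 True by auto
        next
          case False
          have "continuous_on {t2..t1} f" using cont t1 t2 by (auto elim: continuous_on_subset)
          thus ?thesis using IVT2'[of f t1 0 t2] t1 t2 False by auto
        qed
        then obtain x where "min t1 t2 \<le> x" "x \<le> max t1 t2" "f x = 0" by blast
        thus False using nz[of x] t1 t2 by auto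
      qed
      from sign show ?thesis
      proof
        assume pos: "\<forall>t. a < t \<and> t < b \<longrightarrow> f t > 0"
        have "(\<integral>\<^sup>+ s\<in>{a..b}. neg_pow_abs \<gamma> f s \<partial>lborel) \<le> ennreal C"
          unfolding C_def
          by (rule core2[OF ab cont d1 d2 _ neg cd fB A0 g al T]) (use pos in auto)
        thus ?thesis .
      next
        assume negf: "\<forall>t. a < t \<and> t < b \<longrightarrow> f t < 0"
        have eq: "neg_pow_abs \<gamma> (\<lambda>x. - f x) = neg_pow_abs \<gamma> f"
          by (rule ext) (simp add: neg_pow_abs_def)
        have "(\<integral>\<^sup>+ s\<in>{a..b}. neg_pow_abs \<gamma> (\<lambda>x. - f x) s \<partial>lborel) \<le> ennreal C"
          unfolding C_def
        proof (rule core2[where f' = "\<lambda>x. - f' x" and f'' = "\<lambda>x. - f'' x", OF ab _ _ _ _ _ cd _ A0 g al T])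
          show "continuous_on {a..b} (\<lambda>x. - f x)" using cont by (intro continuous_intros)
          show "((\<lambda>x. - f x) has_real_derivative - f' t) (at t)" if "a < t" "t < b" for t
            using d1[OF that] by (rule DERIV_minus)
          show "((\<lambda>x. - f' x) has_real_derivative - f'' t) (at t)" if "a < t" "t < b" for t
            using d2[OF that] by (rule DERIV_minus)
          show "- f t > 0" if "a < t" "t < b" for t using negf that by auto
          show "- f t * - f'' t < 0" if "a < t" "t < b" for t using neg[OF that] by simp
          show "- f t * - f'' t \<le> - (A * ((b - a) / 2) powr \<alpha>)" if "c < t" "t < d" for t
            using fB[OF that] by simp
        qed
        thus ?thesis unfolding eq .
      qed
    qed
  qed
qed

end
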